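(* Let $w \in \mathbb{R}^n$ with $w_j > 0$ for all $j$, and let $x \in \mathbb{R}^n$ with $x_j > 0$ for $2 \le j \le n$. Set $b_j = \frac{w_1}{w_j} x_j$ for $2 \le j\le n$ and $b_1 = x_1^-$, and assume the coordinates $2,\dots,n$ are ordered so that $b_1 \le 0 < b_2 \le b_3 \le \dots \le b_n$. Define $B_1 = \{2,\dots,n\}$, $B_k = \{k+1,\dots,n\}$ for $2 \le k \le n-1$, $B_n = \emptyset$, and intervals $T_1 = [b_1, b_2]$, $T_k = (b_k, b_{k+1}]$ for $2 \le k \le n-1$, $T_n = (b_n, \infty)$. For $1 \le k \le n$ let \[ t_k = w_1 \, \frac{w_1 x_1 + \sum_{j \in B_k} w_j x_j}{w_1^2 + \sum_{j \in B_k} w_j^2}. \] Let $t^* = \arg\min_{t \in [b_1,\infty)} \|x - \phi_t(x)\|$. If $t_k \in T_k$ for some $k$, then $t^* = t_k$, and the set of indices $j\in\{2,\dots,n\}$ with $b_j \ge t^*$ equals $B_k$.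
   Context: $\|\cdot\|$ is the Euclidean norm on $\mathbb{R}^n$. For $t \in \mathbb{R}$, $\phi_t : \mathbb{R}^n \to \mathbb{R}^n$ is defined by $\phi_t(x)_1 = t$, and for $j \ne 1$: $\phi_t(x)_j = \frac{w_j}{w_1} t$ if $\frac{w_1}{w_j} x_j \ge t$, and $\phi_t(x)_j = x_j$ otherwise. $x_1^- := \min\{0, x_1\}$. *)

theory Defs
  imports Main "HOL-Library.Extended_Real" Complex_Main
begin

text \<open>Vectors in R^n are represented as functions nat => real, indices 1..n.\<close>

definition phi :: "(nat \<Rightarrow> real) \<Rightarrow> real \<Rightarrow> (nat \<Rightarrow> real) \<Rightarrow> (nat \<Rightarrow> real)" where
  "phi w t x = (\<lambda>j. if j = 1 then t
                     else if w 1 / w j * x j \<ge> t then w j / w 1 * t else x j)"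

definition enorm :: "nat \<Rightarrow> (nat \<Rightarrow> real) \<Rightarrow> real" where
  "enorm n v = sqrt (\<Sum>j=1..n. (v j)\<^sup>2)"

definition negpart :: "real \<Rightarrow> real" where
  "negpart a = min 0 a"

definition bvec :: "(nat \<Rightarrow> real) \<Rightarrow> (nat \<Rightarrow> real) \<Rightarrow> nat \<Rightarrow> real" where
  "bvec w x j = (if j = 1 then negpart (x 1) else w 1 / w j * x j)"

definition Bset :: "nat \<Rightarrow> nat \<Rightarrow> nat set" where
  "Bset n k = (if k = 1 then {2..n} else if k \<le> n - 1 then {k+1..n} else {})"

definition Tset :: "nat \<Rightarrow> (nat \<Rightarrow> real) \<Rightarrow> nat \<Rightarrow> real set" where
  "Tset n b k = (if k = 1 then {b 1 .. b 2}
                 else if k \<le> n - 1 then {b k <.. b (k+1)}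
                 else {b n <..})"

definition tval :: "nat \<Rightarrow> (nat \<Rightarrow> real) \<Rightarrow> (nat \<Rightarrow> real) \<Rightarrow> nat \<Rightarrow> real" where
  "tval n w x k = w 1 * ((w 1 * x 1 + (\<Sum>j\<in>Bset n k. w j * x j))
                       / ((w 1)\<^sup>2 + (\<Sum>j\<in>Bset n k. (w j)\<^sup>2)))"

end

theory Submission
  imports Defs
begin

lemma tangent_ineq:
  fixes c u v :: real assumes "c \<ge> 0"
  shows "c*(max 0 u)^2 + 2*c*max 0 u * (v - u) \<le> c*(max 0 v)^2"
proof (cases "u \<le> 0")
  case True then show ?thesis using assms by simp
next
  case False
  have "u^2 + 2*u*(v-u) = v^2 - (v-u)^2" by (simp add: power2_eq_square algebra_simps)
  then have "u^2 + 2*u*(v-u) \<le> v^2" using zero_le_power2[of "v-u"] by linarith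
  have "u^2 + 2*u*(v-u) \<le> (max 0 v)^2"
  proof (cases "v \<ge> 0")
    case True then show ?thesis using \<open>u^2 + 2*u*(v-u) \<le> v^2\<close> by (simp add: max_def)
  next
    case f: False
    have "u*v \<le> 0" using False f by (intro mult_nonneg_nonpos) simp_all
    have m: "(max 0 v)^2 = 0" using f by (simp add: max_def)
    have e: "u^2 + 2*u*(v-u) = 2*(u*v) - u*u" by (simp add: power2_eq_square algebra_simps)
    have "u*u \<ge> 0" by simp
    then show ?thesis using m e \<open>u*v \<le> 0\<close> by linarith
  qed
  then have "c*(u^2 + 2*u*(v-u)) \<le> c*(max 0 v)^2" using assms by (rule mult_left_mono)
  then show ?thesis using False by (simp add: algebra_simps)
qed

theorem mainTheorem5:
  fixes n :: nat and w x :: "nat \<Rightarrow> real" and k :: nat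
  assumes n2: "n \<ge> 2"
    and wpos: "\<forall>j\<in>{1..n}. w j > 0"
    and xpos: "\<forall>j\<in>{2..n}. x j > 0"
    and b1: "bvec w x 1 \<le> 0" and b2: "0 < bvec w x 2"
    and sorted: "\<forall>i j. 2 \<le> i \<longrightarrow> i \<le> j \<longrightarrow> j \<le> n \<longrightarrow> bvec w x i \<le> bvec w x j"
    and k: "k \<in> {1..n}"
    and tk: "tval n w x k \<in> Tset n (bvec w x) k"
  shows "is_arg_min (\<lambda>t. enorm n (\<lambda>j. x j - phi w t x j)) (\<lambda>t. t \<ge> bvec w x 1) (tval n w x k)
       \<and> (\<forall>s. is_arg_min (\<lambda>t. enorm n (\<lambda>j. x j - phi w t x j)) (\<lambda>t. t \<ge> bvec w x 1) s
              \<longrightarrow> s = tval n w x k)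
       \<and> {j\<in>{2..n}. bvec w x j \<ge> tval n w x k} = Bset n k"
proof -
  define t where "t = tval n w x k"
  define b where "b = bvec w x"
  define a where "a = (\<lambda>j. w j / w 1)"
  have w1: "w 1 > 0" using wpos n2 by auto
  have bj: "\<And>j. j \<noteq> 1 \<Longrightarrow> b j = w 1 / w j * x j" by (simp add: b_def bvec_def)
  have srt: "\<And>i j. 2 \<le> i \<Longrightarrow> i \<le> j \<Longrightarrow> j \<le> n \<Longrightarrow> b i \<le> b j" using sorted b_def by auto
  have act: "{j\<in>{2..n}. b j \<ge> t} = Bset n k"
  proof (cases "k = 1")
    case True
    then have "t \<le> b 2" using tk by (simp add: Tset_def t_def b_def)
    then show ?thesis using True srt[of 2] by (force simp: Bset_def)
  next
    case False
    show ?thesis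
    proof (cases "k \<le> n - 1")
      case True
      then have "b k < t" "t \<le> b (k+1)" using tk False by (auto simp: Tset_def t_def b_def)
      moreover have "Bset n k = {k+1..n}" using True False by (simp add: Bset_def)
      ultimately show ?thesis
      proof -
        assume bk: "b k < t" and bk1: "t \<le> b (k+1)" and Be: "Bset n k = {k+1..n}"
        have k2: "k \<ge> 2" using False k by auto
        show ?thesis unfolding Be
        proof (rule set_eqI, rule iffI)
          fix j assume "j \<in> {j\<in>{2..n}. t \<le> b j}"
          then have j: "2 \<le> j" "j \<le> n" "t \<le> b j" by auto
          have "\<not> j \<le> k"
          proof
            assume "j \<le> k" then have "b j \<le> b k" using srt[of j k] j True by auto
            then show False using bk j by linarith
          qed
          then show "j \<in> {k+1..n}" using j by auto
        next
          fix j assume "j \<in> {k+1..n}"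
          then have j: "k+1 \<le> j" "j \<le> n" by auto
          then have "b (k+1) \<le> b j" using srt[of "k+1" j] k2 by auto
          then show "j \<in> {j\<in>{2..n}. t \<le> b j}" using j k2 bk1 by auto
        qed
      qed
    next
      case c2: False
      then have "b n < t" using tk False by (auto simp: Tset_def t_def b_def)
      moreover have "Bset n k = {}" using c2 False by (simp add: Bset_def)
      ultimately show ?thesis using srt[of _ n] by force
    qed
  qed
  have tge: "t \<ge> b 1"
  proof (cases "k = 1")
    case True then show ?thesis using tk by (simp add: Tset_def t_def b_def)
  next
    case False
    have "k \<le> n - 1 \<or> k = n" using k by auto
    moreover have "\<not> n \<le> n - 1" using n2 by simp
    ultimately have "b k < t" using tk k False by (auto simp: Tset_def t_def b_def)
    moreover have "b 2 \<le> b k" using srt[of 2 k] k False by auto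
    ultimately show ?thesis using b1 b2 unfolding b_def by linarith
  qed
  define F where "F s = (x 1 - s)^2 + (\<Sum>j=2..n. (a j)^2 * (max 0 (b j - s))^2)" for s
  have Fe: "(\<Sum>j=1..n. (x j - phi w s x j)^2) = F s" for s
  proof -
    have "{1..n} = insert 1 {2..n}" using n2 by auto
    then have "(\<Sum>j=1..n. (x j - phi w s x j)^2) = (x 1 - s)^2 + (\<Sum>j=2..n. (x j - phi w s x j)^2)"
      by (simp add: phi_def)
    also have "(\<Sum>j=2..n. (x j - phi w s x j)^2) = (\<Sum>j=2..n. (a j)^2 * (max 0 (b j - s))^2)"
    proof (rule sum.cong[OF refl])
      fix j assume j: "j \<in> {2..n}"
      then have wj: "w j > 0" using wpos by auto
      have e: "x j - w j / w 1 * s = a j * (b j - s)" using j wj w1 bj[of j]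
        by (simp add: a_def field_simps)
      show "(x j - phi w s x j)^2 = (a j)^2 * (max 0 (b j - s))^2"
        using j bj[of j] e by (auto simp: phi_def max_def power_mult_distrib)
    qed
    finally show ?thesis by (simp add: F_def)
  qed
  have stat: "(\<Sum>j=2..n. (a j)^2 * max 0 (b j - t)) = t - x 1"
  proof -
    let ?B = "Bset n k"
    have Bsub: "?B \<subseteq> {2..n}" using act by auto
    have inB: "\<And>j. j \<in> ?B \<Longrightarrow> t \<le> b j" using act by blast
    have "(\<Sum>j=2..n. (a j)^2 * max 0 (b j - t)) = (\<Sum>j\<in>?B. (a j)^2 * (b j - t))"
    proof -
      have "(\<Sum>j=2..n. (a j)^2 * max 0 (b j - t)) = (\<Sum>j\<in>?B. (a j)^2 * max 0 (b j - t))"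
      proof (rule sum.mono_neutral_right)
        show "finite {2..n}" by simp
        show "Bset n k \<subseteq> {2..n}" by (rule Bsub)
        show "\<forall>i\<in>{2..n} - Bset n k. (a i)^2 * max 0 (b i - t) = 0"
        proof
          fix i assume i: "i \<in> {2..n} - Bset n k"
          then have "\<not> t \<le> b i" using act by blast
          then show "(a i)^2 * max 0 (b i - t) = 0" by (simp add: max_def)
        qed
      qed
      also have "\<dots> = (\<Sum>j\<in>?B. (a j)^2 * (b j - t))"
        by (rule sum.cong) (use inB in \<open>auto simp: max_def\<close>)
      finally show ?thesis .
    qed
    also have "\<dots> = (\<Sum>j\<in>?B. w j * x j) / w 1 - t * (\<Sum>j\<in>?B. (w j)^2) / (w 1)^2"
    proof -
      have "(\<Sum>j\<in>?B. (a j)^2 * (b j - t)) = (\<Sum>j\<in>?B. w j * x j / w 1 - t * (w j)^2 / (w 1)^2)"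
      proof (rule sum.cong[OF refl])
        fix j assume "j \<in> ?B"
        then have j: "j \<in> {2..n}" using Bsub by auto
        then have wj: "w j > 0" using wpos by auto
        show "(a j)^2 * (b j - t) = w j * x j / w 1 - t * (w j)^2 / (w 1)^2"
          using bj[of j] j wj w1 by (simp add: a_def field_simps power2_eq_square)
      qed
      then show ?thesis by (simp add: sum_subtractf sum_divide_distrib sum_distrib_left)
    qed
    also have "\<dots> = t - x 1"
    proof -
      have S2: "(\<Sum>j\<in>?B. (w j)^2) \<ge> 0" by (simp add: sum_nonneg)
      have den: "(w 1)^2 + (\<Sum>j\<in>?B. (w j)^2) > 0" using w1 S2 by (smt (verit) zero_less_power)
      have "t * ((w 1)^2 + (\<Sum>j\<in>?B. (w j)^2)) = w 1 * (w 1 * x 1 + (\<Sum>j\<in>?B. w j * x j))"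
        using den by (simp add: t_def tval_def)
      then show ?thesis using w1 by (simp add: field_simps power2_eq_square)
    qed
    finally show ?thesis .
  qed
  have key: "F t + (s - t)^2 \<le> F s" for s
  proof -
    have "(\<Sum>j=2..n. (a j)^2 * (max 0 (b j - t))^2 + 2*(a j)^2 * max 0 (b j - t) * ((b j - s) - (b j - t)))
          \<le> (\<Sum>j=2..n. (a j)^2 * (max 0 (b j - s))^2)"
      by (rule sum_mono) (rule tangent_ineq, simp)
    moreover have "(\<Sum>j=2..n. (a j)^2 * (max 0 (b j - t))^2 + 2*(a j)^2 * max 0 (b j - t) * ((b j - s) - (b j - t)))
       = (\<Sum>j=2..n. (a j)^2 * (max 0 (b j - t))^2) + 2*(t - s) * (\<Sum>j=2..n. (a j)^2 * max 0 (b j - t))"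
    proof -
      have "(\<Sum>j=2..n. (a j)^2 * (max 0 (b j - t))^2 + 2*(a j)^2 * max 0 (b j - t) * ((b j - s) - (b j - t)))
          = (\<Sum>j=2..n. (a j)^2 * (max 0 (b j - t))^2 + (2*(t - s)) * ((a j)^2 * max 0 (b j - t)))"
        by (rule sum.cong) (simp_all add: algebra_simps)
      also have "\<dots> = (\<Sum>j=2..n. (a j)^2 * (max 0 (b j - t))^2) + (2*(t - s)) * (\<Sum>j=2..n. (a j)^2 * max 0 (b j - t))"
        by (simp only: sum.distrib sum_distrib_left)
      finally show ?thesis .
    qed
    ultimately have "(\<Sum>j=2..n. (a j)^2 * (max 0 (b j - t))^2) + 2*(t - s) * (t - x 1) \<le> (\<Sum>j=2..n. (a j)^2 * (max 0 (b j - s))^2)"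
      using stat by simp
    moreover have "(x 1 - s)^2 + 2*(t-s)*(t - x 1) = (x 1 - t)^2 + (s-t)^2"
      by (simp add: power2_eq_square algebra_simps)
    moreover have "F t = (x 1 - t)^2 + (\<Sum>j=2..n. (a j)^2 * (max 0 (b j - t))^2)"
      "F s = (x 1 - s)^2 + (\<Sum>j=2..n. (a j)^2 * (max 0 (b j - s))^2)" by (simp_all add: F_def)
    ultimately show ?thesis by linarith
  qed
  have en: "enorm n (\<lambda>j. x j - phi w s x j) = sqrt (F s)" for s
    unfolding enorm_def Fe by (rule refl)
  have strict: "s \<noteq> t \<Longrightarrow> sqrt (F t) < sqrt (F s)" for s
  proof -
    assume "s \<noteq> t"
    then have "(s - t)^2 > 0" by simp
    then have "F t < F s" using key[of s] by linarith
    then show ?thesis by (rule real_sqrt_less_mono)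
  qed
  have am: "is_arg_min (\<lambda>t. enorm n (\<lambda>j. x j - phi w t x j)) (\<lambda>t. t \<ge> bvec w x 1) t"
    unfolding is_arg_min_def en
  proof (intro conjI notI)
    show "bvec w x 1 \<le> t" using tge b_def by simp
  next
    assume "\<exists>y. bvec w x 1 \<le> y \<and> sqrt (F y) < sqrt (F t)"
    then obtain y where "sqrt (F y) < sqrt (F t)" by blast
    then show False
    proof (cases "y = t")
      case True then show False using \<open>sqrt (F y) < sqrt (F t)\<close> by simp
    next
      case False then have "sqrt (F t) < sqrt (F y)" by (rule strict)
      then show False using \<open>sqrt (F y) < sqrt (F t)\<close> by linarith
    qed
  qed
  have un: "\<forall>s. is_arg_min (\<lambda>t. enorm n (\<lambda>j. x j - phi w t x j)) (\<lambda>t. t \<ge> bvec w x 1) s \<longrightarrow> s = t"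
    unfolding is_arg_min_def en
  proof (intro allI impI)
    fix s assume h: "bvec w x 1 \<le> s \<and> \<not> (\<exists>y. bvec w x 1 \<le> y \<and> sqrt (F y) < sqrt (F s))"
    show "s = t"
    proof (rule ccontr)
      assume "s \<noteq> t"
      then have "sqrt (F t) < sqrt (F s)" by (rule strict)
      moreover have "bvec w x 1 \<le> t" using tge b_def by simp
      ultimately show False using h by blast
    qed
  qed
  show ?thesis using am un act unfolding t_def b_def by (intro conjI) blast+
qed

end
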